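(* Let $\mathcal{C}$ be a set of representatives of the isomorphism classes of finite connected racks. For $C\in\mathcal{C}$, let $\Phi_C\colon \mathrm{B}(\mathcal{R})\to\mathbb{Z}$ be the ring homomorphism determined by $\Phi_C(b(R))=|\mathrm{Mor}_{\mathcal{R}}(C,R)|$ for finite racks $R$, where $\mathrm{Mor}_{\mathcal{R}}(C,R)$ is the set of rack morphisms $C\to R$. Then the ring homomorphism $$\prod_{C\in\mathcal{C}}\Phi_C\colon \mathrm{B}(\mathcal{R})\longrightarrow\prod_{C\in\mathcal{C}}\mathbb{Z}$$ is injective.
   Context: A rack is a set $R$ with a binary operation $\rhd$ such that every left multiplication $\ell_a\colon b\mapsto a\rhd b$ is a bijection and $a\rhd(b\rhd c)=(a\rhd b)\rhd(a\rhd c)$ for all $a,b,c$. Morphisms of racks are maps preserving $\rhd$; the product $R\times S$ of racks is the cartesian product with componentwise operation. The inner automorphism group $\mathrm{Inn}(R)$ is the subgroup of the symmetric group on $R$ generated by all $\ell_a$. A rack is connected if it is non-empty and $\mathrm{Inn}(R)$ acts transitively on $R$. A subrack of $R$ is a subset $S$ with $\ell_s(S)=S$ for all $s\in S$. A decomposition of $R$ into $S$ and $T$ means that $S,T$ are disjoint subracks (possibly empty) with $S\cup T=R$. The Burnside ring of finite racks $\mathrm{B}(\mathcal{R})$ is the abelian group generated by symbols $b(R)$, one for each finite rack $R$, subject to the relations $b(R_1)=b(R_2)$ whenever $R_1\cong R_2$, and $b(R)=b(S)+b(T)$ whenever $R$ decomposes into subracks $S$ and $T$; it is a commutative ring with $b(R)b(R')=b(R\times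 R')$ and unit $b(\star)$, $\star$ the one-element rack. (That $\Phi_C$ is a well-defined ring homomorphism is part of the setting.) *)

theory Defs
  imports Main "HOL-Library.FuncSet"
begin

text \<open>A (finite) rack is represented by a carrier set of naturals together with an
operation. Every finite rack is isomorphic to one of this form.\<close>

type_synonym rack = "nat set \<times> (nat \<Rightarrow> nat \<Rightarrow> nat)"

definition is_rack :: "rack \<Rightarrow> bool" where
  "is_rack R \<longleftrightarrow> (let A = fst R; op = snd R in
     (\<forall>a\<in>A. \<forall>b\<in>A. op a b \<in> A) \<and>
     (\<forall>a\<in>A. bij_betw (op a) A A) \<and>
     (\<forall>a\<in>A. \<forall>b\<in>A. \<forall>c\<in>A. op a (op b c) = op (op a b) (op a c)))"

definition finite_rack :: "rack \<Rightarrow> bool" where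
  "finite_rack R \<longleftrightarrow> is_rack R \<and> finite (fst R)"

definition rack_hom :: "rack \<Rightarrow> rack \<Rightarrow> (nat \<Rightarrow> nat) \<Rightarrow> bool" where
  "rack_hom R S f \<longleftrightarrow> f \<in> fst R \<rightarrow> fst S \<and>
     (\<forall>a\<in>fst R. \<forall>b\<in>fst R. f (snd R a b) = snd S (f a) (f b))"

definition Mor :: "rack \<Rightarrow> rack \<Rightarrow> (nat \<Rightarrow> nat) set" where
  "Mor C R = {f. f \<in> fst C \<rightarrow>\<^sub>E fst R \<and> rack_hom C R f}"

definition rack_iso :: "rack \<Rightarrow> rack \<Rightarrow> bool" where
  "rack_iso R S \<longleftrightarrow> (\<exists>f. bij_betw f (fst R) (fst S) \<and> rack_hom R S f)"

inductive_set Inn :: "rack \<Rightarrow> (nat \<Rightarrow> nat) set" for R :: rack where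
  Inn_id: "id \<in> Inn R"
| Inn_left: "g \<in> Inn R \<Longrightarrow> a \<in> fst R \<Longrightarrow> snd R a \<circ> g \<in> Inn R"
| Inn_left_inv: "g \<in> Inn R \<Longrightarrow> a \<in> fst R \<Longrightarrow> inv_into (fst R) (snd R a) \<circ> g \<in> Inn R"

definition connected_rack :: "rack \<Rightarrow> bool" where
  "connected_rack R \<longleftrightarrow> fst R \<noteq> {} \<and> (\<forall>x\<in>fst R. \<forall>y\<in>fst R. \<exists>g\<in>Inn R. g x = y)"

definition subrack :: "rack \<Rightarrow> nat set \<Rightarrow> bool" where
  "subrack R S \<longleftrightarrow> S \<subseteq> fst R \<and> (\<forall>s\<in>S. snd R s ` S = S)"

definition decomposition :: "rack \<Rightarrow> nat set \<Rightarrow> nat set \<Rightarrow> bool" where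
  "decomposition R S T \<longleftrightarrow> subrack R S \<and> subrack R T \<and> S \<inter> T = {} \<and> S \<union> T = fst R"

text \<open>Free abelian group on symbols b(R), R a finite rack: finitely supported integer
functions supported on finite racks.\<close>
definition free_elem :: "(rack \<Rightarrow> int) \<Rightarrow> bool" where
  "free_elem x \<longleftrightarrow> finite {R. x R \<noteq> 0} \<and> (\<forall>R. x R \<noteq> 0 \<longrightarrow> finite_rack R)"

definition gen :: "rack \<Rightarrow> rack \<Rightarrow> int" where
  "gen R = (\<lambda>X. if X = R then 1 else 0)"

text \<open>The subgroup of relations defining B(R).\<close>
inductive_set burnside_rel :: "(rack \<Rightarrow> int) set" where
  rel_zero: "(\<lambda>_. 0) \<in> burnside_rel"
| rel_iso: "finite_rack R1 \<Longrightarrow> finite_rack R2 \<Longrightarrow> rack_iso R1 R2 \<Longrightarrow>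
     (\<lambda>X. gen R1 X - gen R2 X) \<in> burnside_rel"
| rel_dec: "finite_rack R \<Longrightarrow> decomposition R S T \<Longrightarrow>
     (\<lambda>X. gen R X - gen (S, snd R) X - gen (T, snd R) X) \<in> burnside_rel"
| rel_add: "x \<in> burnside_rel \<Longrightarrow> y \<in> burnside_rel \<Longrightarrow> (\<lambda>X. x X + y X) \<in> burnside_rel"
| rel_neg: "x \<in> burnside_rel \<Longrightarrow> (\<lambda>X. - x X) \<in> burnside_rel"

definition Phi :: "rack \<Rightarrow> (rack \<Rightarrow> int) \<Rightarrow> int" where
  "Phi C x = (\<Sum>R\<in>{R. x R \<noteq> 0}. x R * int (card (Mor C R)))"

definition rep_set :: "rack set \<Rightarrow> bool" where
  "rep_set \<C> \<longleftrightarrow> (\<forall>C\<in>\<C>. finite_rack C \<and> connected_rack C) \<and>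
     (\<forall>R. finite_rack R \<and> connected_rack R \<longrightarrow> (\<exists>!C. C \<in> \<C> \<and> rack_iso R C))"

end

theory Submission
  imports Defs
begin
lemma rack_closed: "is_rack R \<Longrightarrow> a \<in> fst R \<Longrightarrow> b \<in> fst R \<Longrightarrow> snd R a b \<in> fst R"
  unfolding is_rack_def Let_def by blast
lemma rack_bij: "is_rack R \<Longrightarrow> a \<in> fst R \<Longrightarrow> bij_betw (snd R a) (fst R) (fst R)"
  unfolding is_rack_def Let_def by blast
lemma rack_dist: "is_rack R \<Longrightarrow> a \<in> fst R \<Longrightarrow> b \<in> fst R \<Longrightarrow> c \<in> fst R \<Longrightarrow>
   snd R a (snd R b c) = snd R (snd R a b) (snd R a c)"
  unfolding is_rack_def Let_def by blast
lemma is_rackI: assumes "\<And>a b. a \<in> A \<Longrightarrow> b \<in> A \<Longrightarrow> op a b \<in> A"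
  "\<And>a. a \<in> A \<Longrightarrow> bij_betw (op a) A A"
  "\<And>a b c. a \<in> A \<Longrightarrow> b \<in> A \<Longrightarrow> c \<in> A \<Longrightarrow> op a (op b c) = op (op a b) (op a c)"
  shows "is_rack (A, op)"
  unfolding is_rack_def Let_def fst_conv snd_conv using assms by blast

lemma subrack_rack: assumes "is_rack R" "subrack R S" shows "is_rack (S, snd R)"
proof (rule is_rackI)
  have sub: "S \<subseteq> fst R" and im: "\<forall>s\<in>S. snd R s ` S = S" using assms(2) unfolding subrack_def by auto
  show "bij_betw (snd R a) S S" if "a \<in> S" for a
  proof -
    have "inj_on (snd R a) (fst R)" using rack_bij[OF assms(1)] that sub bij_betw_def by blast
    then have "inj_on (snd R a) S" using sub inj_on_subset by blast
    then show ?thesis using im that unfolding bij_betw_def by blast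
  qed
  show "snd R a b \<in> S" if "a \<in> S" "b \<in> S" for a b using im that by blast
  show "snd R a (snd R b c) = snd R (snd R a b) (snd R a c)" if "a \<in> S" "b \<in> S" "c \<in> S" for a b c
    using rack_dist[OF assms(1)] sub that by blast
qed
lemma Inn_closed: "g \<in> Inn R \<Longrightarrow> is_rack R \<Longrightarrow> x \<in> fst R \<Longrightarrow> g x \<in> fst R"
proof (induction g arbitrary: x rule: Inn.induct)
  case Inn_id then show ?case by simp
next
  case (Inn_left g a) then show ?case by (simp add: rack_closed)
next
  case (Inn_left_inv g a)
  then have "g x \<in> fst R" by blast
  moreover have "bij_betw (snd R a) (fst R) (fst R)" using Inn_left_inv rack_bij by blast
  ultimately show ?case by (simp add: bij_betw_def inv_into_into)
qed

lemma Mor_finite: "finite (fst D) \<Longrightarrow> finite (fst C) \<Longrightarrow> finite (Mor D C)"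
proof -
  assume "finite (fst D)" "finite (fst C)"
  then have "finite (fst D \<rightarrow>\<^sub>E fst C)" by (simp add: finite_PiE)
  then show ?thesis unfolding Mor_def by (rule rev_finite_subset) blast
qed

lemma rack_iso_sym: assumes "is_rack R" "rack_iso R S" shows "rack_iso S R"
proof -
  obtain h where h: "bij_betw h (fst R) (fst S)" "rack_hom R S h" using assms(2) rack_iso_def by blast
  let ?g = "inv_into (fst R) h"
  have b: "bij_betw ?g (fst S) (fst R)" using h(1) by (rule bij_betw_inv_into)
  have "?g (snd S x y) = snd R (?g x) (?g y)" if "x \<in> fst S" "y \<in> fst S" for x y
  proof -
    have gx: "?g x \<in> fst R" "?g y \<in> fst R" using b that bij_betwE by blast+
    have "h (snd R (?g x) (?g y)) = snd S (h (?g x)) (h (?g y))"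
      using h(2) gx unfolding rack_hom_def by blast
    also have "\<dots> = snd S x y" using h(1) that by (simp add: bij_betw_inv_into_right)
    finally have "h (snd R (?g x) (?g y)) = snd S x y" .
    moreover have "snd R (?g x) (?g y) \<in> fst R" using rack_closed[OF assms(1)] gx by blast
    ultimately show ?thesis using h(1) bij_betw_inv_into_left by metis
  qed
  then have "rack_hom S R ?g" using b unfolding rack_hom_def bij_betw_def by blast
  then show ?thesis using b unfolding rack_iso_def by blast
qed

lemma rack_iso_refl: "rack_iso R R"
  unfolding rack_iso_def rack_hom_def by (rule exI[of _ id]) auto

lemma Phi_eq: "finite F \<Longrightarrow> {R. x R \<noteq> 0} \<subseteq> F \<Longrightarrow>
  Phi C x = (\<Sum>R\<in>F. x R * int (card (Mor C R)))"
  unfolding Phi_def by (rule sum.mono_neutral_left) auto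

lemma sum_gen: "finite F \<Longrightarrow> R \<in> F \<Longrightarrow> (\<Sum>X\<in>F. gen R X * g X) = (g R :: int)"
proof -
  assume a: "finite F" "R \<in> F"
  have "(\<Sum>X\<in>F. gen R X * g X) = (\<Sum>X\<in>F. if R = X then g X else 0)"
    by (rule sum.cong) (auto simp: gen_def)
  also have "\<dots> = g R" using a by (simp add: sum.delta)
  finally show ?thesis .
qed
lemma Mor_transport:
  assumes "is_rack D" "bij_betw h (fst X) (fst Y)" "rack_hom X Y h" "f \<in> Mor D X"
  shows "restrict (h \<circ> f) (fst D) \<in> Mor D Y" "restrict (h \<circ> f) (fst D) ` fst D = h ` (f ` fst D)"
proof -
  have f: "f \<in> fst D \<rightarrow> fst X" "\<forall>a\<in>fst D. \<forall>b\<in>fst D. f (snd D a b) = snd X (f a) (f b)"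
    using assms(4) unfolding Mor_def rack_hom_def by auto
  have hh: "\<forall>a\<in>fst X. \<forall>b\<in>fst X. h (snd X a b) = snd Y (h a) (h b)" "h \<in> fst X \<rightarrow> fst Y"
    using assms(3) unfolding rack_hom_def by auto
  have m: "restrict (h \<circ> f) (fst D) \<in> fst D \<rightarrow>\<^sub>E fst Y" using f(1) hh(2) by auto
  have "restrict (h \<circ> f) (fst D) (snd D a b) = snd Y (restrict (h \<circ> f) (fst D) a) (restrict (h \<circ> f) (fst D) b)"
    if "a \<in> fst D" "b \<in> fst D" for a b
    using that f hh rack_closed[OF assms(1) that] by (simp add: Pi_iff)
  then show "restrict (h \<circ> f) (fst D) \<in> Mor D Y" using m unfolding Mor_def rack_hom_def by auto
  show "restrict (h \<circ> f) (fst D) ` fst D = h ` (f ` fst D)" by auto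
qed

lemma Mor_transport_inj:
  assumes "bij_betw h (fst X) (fst Y)"
  shows "inj_on (\<lambda>f. restrict (h \<circ> f) (fst D)) (Mor D X)"
proof (rule inj_onI)
  fix f g assume fg: "f \<in> Mor D X" "g \<in> Mor D X" "restrict (h \<circ> f) (fst D) = restrict (h \<circ> g) (fst D)"
  show "f = g"
  proof (rule extensionalityI[of _ "fst D"])
    show "f \<in> extensional (fst D)" "g \<in> extensional (fst D)" using fg unfolding Mor_def by (auto simp: PiE_def)
    fix a assume a: "a \<in> fst D"
    have "h (f a) = h (g a)" using fg(3) a by (metis comp_apply restrict_apply')
    moreover have "f a \<in> fst X" "g a \<in> fst X" using fg a unfolding Mor_def by auto
    ultimately show "f a = g a" using assms unfolding bij_betw_def inj_on_def by blast
  qed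
qed

lemma card_Mor_le:
  assumes "is_rack D" "finite (fst D)" "finite (fst Y)" "rack_iso X Y"
  shows "card (Mor D X) \<le> card (Mor D Y)"
proof -
  obtain h where h: "bij_betw h (fst X) (fst Y)" "rack_hom X Y h" using assms(4) rack_iso_def by blast
  have "(\<lambda>f. restrict (h \<circ> f) (fst D)) ` Mor D X \<subseteq> Mor D Y" using Mor_transport(1)[OF assms(1) h] by blast
  then show ?thesis using card_inj_on_le[OF Mor_transport_inj[OF h(1)]] Mor_finite[OF assms(2,3)] by blast
qed

lemma card_sj_le:
  assumes "is_rack D" "finite (fst D)" "finite (fst Y)" "rack_iso X Y"
  shows "card {f \<in> Mor D X. f ` fst D = fst X} \<le> card {f \<in> Mor D Y. f ` fst D = fst Y}"
proof -
  obtain h where h: "bij_betw h (fst X) (fst Y)" "rack_hom X Y h" using assms(4) rack_iso_def by blast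
  have "(\<lambda>f. restrict (h \<circ> f) (fst D)) ` {f \<in> Mor D X. f ` fst D = fst X} \<subseteq> {f \<in> Mor D Y. f ` fst D = fst Y}"
  proof
    fix g assume "g \<in> (\<lambda>f. restrict (h \<circ> f) (fst D)) ` {f \<in> Mor D X. f ` fst D = fst X}"
    then obtain f where f: "f \<in> Mor D X" "f ` fst D = fst X" "g = restrict (h \<circ> f) (fst D)" by blast
    show "g \<in> {f \<in> Mor D Y. f ` fst D = fst Y}"
      using Mor_transport[OF assms(1) h f(1)] f(2,3) h(1) by (simp add: bij_betw_def)
  qed
  moreover have "finite {f \<in> Mor D Y. f ` fst D = fst Y}" using Mor_finite[OF assms(2,3)] by simp
  moreover have "inj_on (\<lambda>f. restrict (h \<circ> f) (fst D)) {f \<in> Mor D X. f ` fst D = fst X}"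
    using Mor_transport_inj[OF h(1)] inj_on_subset by (metis (no_types, lifting) mem_Collect_eq subsetI)
  ultimately show ?thesis using card_inj_on_le by blast
qed

lemma card_Mor_iso:
  assumes "finite_rack D" "finite_rack X" "finite_rack Y" "rack_iso X Y"
  shows "card (Mor D X) = card (Mor D Y)"
    "card {f \<in> Mor D X. f ` fst D = fst X} = card {f \<in> Mor D Y. f ` fst D = fst Y}"
proof -
  have yx: "rack_iso Y X" using rack_iso_sym assms unfolding finite_rack_def by blast
  show "card (Mor D X) = card (Mor D Y)"
    using card_Mor_le[of D Y X] card_Mor_le[of D X Y] assms yx unfolding finite_rack_def by (meson le_antisym)
  show "card {f \<in> Mor D X. f ` fst D = fst X} = card {f \<in> Mor D Y. f ` fst D = fst Y}"
    using card_sj_le[of D Y X] card_sj_le[of D X Y] assms yx unfolding finite_rack_def by (meson le_antisym)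
qed


lemma dec_preserve:
  assumes "is_rack R" "decomposition R S T" "a \<in> fst R" "z \<in> fst R"
  shows "snd R a z \<in> S \<longleftrightarrow> z \<in> S"
proof -
  have d: "S \<subseteq> fst R" "T \<subseteq> fst R" "\<forall>s\<in>S. snd R s ` S = S" "\<forall>t\<in>T. snd R t ` T = T" "S \<inter> T = {}" "S \<union> T = fst R"
    using assms(2) unfolding decomposition_def subrack_def by auto
  have inj: "inj_on (snd R a) (fst R)" using rack_bij[OF assms(1,3)] bij_betw_def by blast
  have cl: "snd R a z \<in> fst R" using rack_closed[OF assms(1,3,4)] .
  show ?thesis
  proof (cases "a \<in> S")
    case True
    show ?thesis
    proof
      assume az: "snd R a z \<in> S"
      then obtain w where w: "w \<in> S" "snd R a w = snd R a z" using d(3) True by (metis imageE)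
      then have "w = z" using inj d(1) assms(4) inj_on_def by (metis subsetD)
      then show "z \<in> S" using w by simp
    qed (use d(3) True in blast)
  next
    case False
    then have aT: "a \<in> T" using d(6) assms(3) by blast
    show ?thesis
    proof
      assume az: "snd R a z \<in> S"
      show "z \<in> S"
      proof (rule ccontr)
        assume "z \<notin> S"
        then have "z \<in> T" using d(6) assms(4) by blast
        then have "snd R a z \<in> T" using d(4) aT by blast
        then show False using az d(5) by blast
      qed
    next
      assume zS: "z \<in> S"
      show "snd R a z \<in> S"
      proof (rule ccontr)
        assume "snd R a z \<notin> S"
        then have "snd R a z \<in> T" using cl d(6) by blast
        then obtain w where w: "w \<in> T" "snd R a w = snd R a z" using d(4) aT by (metis imageE)
        then have "w = z" using inj d(2) assms(4) inj_on_def by (metis subsetD)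
        then show False using w zS d(5) by blast
      qed
    qed
  qed
qed

lemma hom_Inn_invariant:
  assumes "is_rack R" "is_rack C" "decomposition R S T" "rack_hom C R f" "g \<in> Inn C"
  shows "\<forall>c\<in>fst C. f (g c) \<in> S \<longleftrightarrow> f c \<in> S"
  using assms(5)
proof (induction g rule: Inn.induct)
  case Inn_id then show ?case by simp
next
  case (Inn_left g a)
  have fC: "f \<in> fst C \<rightarrow> fst R" "\<forall>a\<in>fst C. \<forall>b\<in>fst C. f (snd C a b) = snd R (f a) (f b)"
    using assms(4) unfolding rack_hom_def by auto
  show ?case
  proof
    fix c assume c: "c \<in> fst C"
    have gc: "g c \<in> fst C" using Inn_closed[OF Inn_left(1) assms(2) c] .
    have "f (snd C a (g c)) = snd R (f a) (f (g c))" using fC(2) Inn_left(2) gc by blast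
    moreover have "f a \<in> fst R" "f (g c) \<in> fst R" using fC(1) Inn_left(2) gc by auto
    ultimately show "f ((snd C a \<circ> g) c) \<in> S \<longleftrightarrow> f c \<in> S"
      using dec_preserve[OF assms(1,3)] Inn_left(3) c by simp
  qed
next
  case (Inn_left_inv g a)
  have fC: "f \<in> fst C \<rightarrow> fst R" "\<forall>a\<in>fst C. \<forall>b\<in>fst C. f (snd C a b) = snd R (f a) (f b)"
    using assms(4) unfolding rack_hom_def by auto
  have bj: "bij_betw (snd C a) (fst C) (fst C)" using rack_bij[OF assms(2) Inn_left_inv(2)] .
  show ?case
  proof
    fix c assume c: "c \<in> fst C"
    have gc: "g c \<in> fst C" using Inn_closed[OF Inn_left_inv(1) assms(2) c] .
    define w where "w = inv_into (fst C) (snd C a) (g c)"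
    have w: "w \<in> fst C" "snd C a w = g c" using bj gc unfolding w_def
      by (auto simp: bij_betw_def inv_into_into f_inv_into_f)
    have "f (g c) = snd R (f a) (f w)" using fC(2) Inn_left_inv(2) w by metis
    moreover have "f a \<in> fst R" "f w \<in> fst R" using fC(1) Inn_left_inv(2) w by auto
    ultimately have "f (g c) \<in> S \<longleftrightarrow> f w \<in> S" using dec_preserve[OF assms(1,3)] by simp
    then show "f ((inv_into (fst C) (snd C a) \<circ> g) c) \<in> S \<longleftrightarrow> f c \<in> S"
      using Inn_left_inv(3) c unfolding w_def by simp
  qed
qed

lemma hom_conn_side:
  assumes "is_rack R" "is_rack C" "connected_rack C" "decomposition R S T" "rack_hom C R f"
  shows "f ` fst C \<subseteq> S \<or> f ` fst C \<subseteq> T"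
proof -
  have cr: "fst C \<noteq> {}" "\<forall>x\<in>fst C. \<forall>y\<in>fst C. \<exists>g\<in>Inn C. g x = y"
    using assms(3) unfolding connected_rack_def by auto
  obtain c0 where c0: "c0 \<in> fst C" using cr(1) by auto
  have all: "f c \<in> S \<longleftrightarrow> f c0 \<in> S" if cC: "c \<in> fst C" for c
  proof -
    obtain g where g: "g \<in> Inn C" "g c0 = c" using cr(2) c0 cC by meson
    have "f (g c0) \<in> S \<longleftrightarrow> f c0 \<in> S" using hom_Inn_invariant[OF assms(1,2,4,5) g(1)] c0 by simp
    then show ?thesis using g(2) by simp
  qed
  have fR: "f ` fst C \<subseteq> fst R" using assms(5) unfolding rack_hom_def by auto
  have ST: "S \<union> T = fst R" using assms(4) unfolding decomposition_def by auto
  show ?thesis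
  proof (cases "f c0 \<in> S")
    case True
    then have "f ` fst C \<subseteq> S" using all by auto
    then show ?thesis by simp
  next
    case False
    have "f c \<in> T" if "c \<in> fst C" for c
    proof -
      have "f c \<notin> S" using all[OF that] False by simp
      moreover have "f c \<in> fst R" using fR that by auto
      ultimately show ?thesis using ST by auto
    qed
    then show ?thesis by auto
  qed
qed

lemma Mor_sub: "S \<subseteq> fst R \<Longrightarrow> Mor C (S, snd R) = {f \<in> Mor C R. f ` fst C \<subseteq> S}"
  unfolding Mor_def rack_hom_def by auto

lemma card_Mor_dec:
  assumes "finite_rack R" "finite_rack C" "connected_rack C" "decomposition R S T"
  shows "card (Mor C R) = card (Mor C (S, snd R)) + card (Mor C (T, snd R))"
proof -
  have d: "S \<subseteq> fst R" "T \<subseteq> fst R" "S \<inter> T = {}"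
    using assms(4) unfolding decomposition_def subrack_def by auto
  have ne: "fst C \<noteq> {}" using assms(3) unfolding connected_rack_def by auto
  have rr: "is_rack R" "is_rack C" using assms(1,2) unfolding finite_rack_def by auto
  have side: "f ` fst C \<subseteq> S \<or> f ` fst C \<subseteq> T" if "f \<in> Mor C R" for f
  proof -
    have "rack_hom C R f" using that unfolding Mor_def by simp
    then show ?thesis using hom_conn_side[OF rr assms(3,4)] by simp
  qed
  have "Mor C R = {f \<in> Mor C R. f ` fst C \<subseteq> S} \<union> {f \<in> Mor C R. f ` fst C \<subseteq> T}"
    using side by auto
  then have "Mor C R = Mor C (S, snd R) \<union> Mor C (T, snd R)"
    unfolding Mor_sub[OF d(1)] Mor_sub[OF d(2)] .
  moreover have "Mor C (S, snd R) \<inter> Mor C (T, snd R) = {}"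
    using d(3) ne unfolding Mor_sub[OF d(1)] Mor_sub[OF d(2)] by blast
  moreover have "finite (Mor C (S, snd R))" "finite (Mor C (T, snd R))"
    using Mor_finite assms d unfolding finite_rack_def by (simp_all add: finite_subset)
  ultimately show ?thesis by (simp add: card_Un_disjoint)
qed

lemma Phi_rel:
  assumes "finite_rack C" "connected_rack C" "r \<in> burnside_rel"
  shows "finite {R. r R \<noteq> 0} \<and> Phi C r = 0"
  using assms(3)
proof (induction r rule: burnside_rel.induct)
  case rel_zero
  then show ?case unfolding Phi_def by simp
next
  case (rel_iso R1 R2)
  let ?m = "\<lambda>X. int (card (Mor C X))"
  have sub: "{R. gen R1 R - gen R2 R \<noteq> 0} \<subseteq> {R1, R2}" by (auto simp: gen_def)
  have "Phi C (\<lambda>X. gen R1 X - gen R2 X) = (\<Sum>X\<in>{R1,R2}. (gen R1 X - gen R2 X) * ?m X)"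
    using Phi_eq[OF _ sub] by simp
  also have "\<dots> = (\<Sum>X\<in>{R1,R2}. gen R1 X * ?m X) - (\<Sum>X\<in>{R1,R2}. gen R2 X * ?m X)"
    by (simp add: left_diff_distrib sum_subtractf)
  also have "\<dots> = ?m R1 - ?m R2" by (simp add: sum_gen)
  also have "\<dots> = 0" using card_Mor_iso(1)[OF assms(1) rel_iso] by simp
  finally show ?case using sub finite_subset by auto
next
  case (rel_dec R S T)
  let ?m = "\<lambda>X. int (card (Mor C X))"
  let ?F = "{R, (S, snd R), (T, snd R)}"
  have sub: "{X. gen R X - gen (S, snd R) X - gen (T, snd R) X \<noteq> 0} \<subseteq> ?F" by (auto simp: gen_def)
  have "Phi C (\<lambda>X. gen R X - gen (S, snd R) X - gen (T, snd R) X)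
     = (\<Sum>X\<in>?F. (gen R X - gen (S, snd R) X - gen (T, snd R) X) * ?m X)"
    using Phi_eq[OF _ sub] by simp
  also have "\<dots> = (\<Sum>X\<in>?F. gen R X * ?m X) - (\<Sum>X\<in>?F. gen (S, snd R) X * ?m X) - (\<Sum>X\<in>?F. gen (T, snd R) X * ?m X)"
    by (simp add: left_diff_distrib sum_subtractf)
  also have "\<dots> = ?m R - ?m (S, snd R) - ?m (T, snd R)"
    by (simp only: sum_gen[of ?F] finite.emptyI finite.insertI insertI1 insertI2 insert_commute)
  also have "\<dots> = 0" using card_Mor_dec[OF rel_dec(1) assms(1,2) rel_dec(2)] by simp
  finally show ?case using sub finite_subset by auto
next
  case (rel_add x y)
  have sub: "{R. x R + y R \<noteq> 0} \<subseteq> {R. x R \<noteq> 0} \<union> {R. y R \<noteq> 0}" by auto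
  have fin: "finite ({R. x R \<noteq> 0} \<union> {R. y R \<noteq> 0})" using rel_add by auto
  have "Phi C (\<lambda>X. x X + y X) = (\<Sum>X\<in>{R. x R \<noteq> 0} \<union> {R. y R \<noteq> 0}. (x X + y X) * int (card (Mor C X)))"
    using Phi_eq[OF fin sub] .
  also have "\<dots> = Phi C x + Phi C y"
    using Phi_eq[OF fin, of x] Phi_eq[OF fin, of y] by (simp add: distrib_right sum.distrib)
  finally show ?case using rel_add fin sub finite_subset by auto
next
  case (rel_neg x)
  have "Phi C (\<lambda>X. - x X) = - Phi C x" unfolding Phi_def by (simp add: sum_negf)
  then show ?case using rel_neg by simp
qed

lemma rel_add3: "a \<in> burnside_rel \<Longrightarrow> b \<in> burnside_rel \<Longrightarrow> c \<in> burnside_rel \<Longrightarrow>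
  (\<lambda>X. a X + b X + c X) \<in> burnside_rel"
  using burnside_rel.rel_add[of "\<lambda>X. a X + b X" c] burnside_rel.rel_add[of a b] by simp

lemma rel_smult_nat: "r \<in> burnside_rel \<Longrightarrow> (\<lambda>X. int n * r X) \<in> burnside_rel"
proof (induction n)
  case 0 then show ?case using burnside_rel.rel_zero by simp
next
  case (Suc n)
  then have "(\<lambda>X. int n * r X + r X) \<in> burnside_rel" using burnside_rel.rel_add by blast
  then show ?case by (simp add: algebra_simps)
qed

lemma rel_smult: "r \<in> burnside_rel \<Longrightarrow> (\<lambda>X. k * r X) \<in> burnside_rel"
proof (cases "k \<ge> 0")
  case True
  assume r: "r \<in> burnside_rel"
  show ?thesis using rel_smult_nat[OF r, of "nat k"] True by simp
next
  case False
  assume r: "r \<in> burnside_rel"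
  have "(\<lambda>X. - (int (nat (-k)) * r X)) \<in> burnside_rel"
    using burnside_rel.rel_neg[OF rel_smult_nat[OF r, of "nat (-k)"]] .
  then show ?thesis using False by simp
qed

lemma orbit_invariant:
  assumes "is_rack R" "x0 \<in> fst R" "a \<in> fst R"
  shows "snd R a ` {g x0 |g. g \<in> Inn R} = {g x0 |g. g \<in> Inn R}"
proof
  show "snd R a ` {g x0 |g. g \<in> Inn R} \<subseteq> {g x0 |g. g \<in> Inn R}"
  proof
    fix z assume "z \<in> snd R a ` {g x0 |g. g \<in> Inn R}"
    then obtain g where g: "g \<in> Inn R" "z = snd R a (g x0)" by blast
    then have "snd R a \<circ> g \<in> Inn R" using assms(3) Inn.Inn_left by blast
    moreover have "z = (snd R a \<circ> g) x0" using g(2) by simp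
    ultimately show "z \<in> {g x0 |g. g \<in> Inn R}" by blast
  qed
  show "{g x0 |g. g \<in> Inn R} \<subseteq> snd R a ` {g x0 |g. g \<in> Inn R}"
  proof
    fix z assume "z \<in> {g x0 |g. g \<in> Inn R}"
    then obtain g where g: "g \<in> Inn R" "z = g x0" by blast
    have zR: "z \<in> fst R" using Inn_closed[OF g(1) assms(1,2)] g(2) by simp
    have bj: "bij_betw (snd R a) (fst R) (fst R)" using rack_bij[OF assms(1,3)] .
    have "inv_into (fst R) (snd R a) \<circ> g \<in> Inn R" using g(1) assms(3) Inn.Inn_left_inv by blast
    moreover have "snd R a (inv_into (fst R) (snd R a) z) = z"
      using bj zR by (simp add: bij_betw_def f_inv_into_f)
    moreover have "inv_into (fst R) (snd R a) z = (inv_into (fst R) (snd R a) \<circ> g) x0" using g(2) by simp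
    ultimately have "inv_into (fst R) (snd R a) z \<in> {g x0 |g. g \<in> Inn R}" 
      "z = snd R a (inv_into (fst R) (snd R a) z)" by (blast, metis)
    then show "z \<in> snd R a ` {g x0 |g. g \<in> Inn R}" by (rule rev_image_eqI)
  qed
qed

lemma orbit_decomposition:
  assumes "is_rack R" "x0 \<in> fst R"
  shows "decomposition R {g x0 |g. g \<in> Inn R} (fst R - {g x0 |g. g \<in> Inn R})"
proof -
  let ?O = "{g x0 |g. g \<in> Inn R}"
  have Osub: "?O \<subseteq> fst R" using Inn_closed[OF _ assms] by blast
  have inv: "snd R a ` ?O = ?O" if "a \<in> fst R" for a using orbit_invariant[OF assms that] .
  have inv2: "snd R a ` (fst R - ?O) = fst R - ?O" if a: "a \<in> fst R" for a
  proof -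
    have bj: "bij_betw (snd R a) (fst R) (fst R)" using rack_bij[OF assms(1) a] .
    have "snd R a ` (fst R - ?O) = snd R a ` fst R - snd R a ` ?O"
      using bj Osub unfolding bij_betw_def by (intro inj_on_image_set_diff[of _ "fst R"]) auto
    then show ?thesis using bj inv[OF a] unfolding bij_betw_def by simp
  qed
  have "subrack R ?O" unfolding subrack_def using Osub inv by (simp add: subset_iff)
  moreover have "subrack R (fst R - ?O)" unfolding subrack_def using inv2 by simp
  moreover have "?O \<inter> (fst R - ?O) = {}" "?O \<union> (fst R - ?O) = fst R" using Osub by auto
  ultimately show ?thesis unfolding decomposition_def by simp
qed

lemma reduce_gen:
  assumes rep: "rep_set \<C>" and R: "finite_rack R"
  shows "\<exists>y. finite {X. y X \<noteq> 0} \<and> {X. y X \<noteq> 0} \<subseteq> \<C> \<and> (\<lambda>X. gen R X - y X) \<in> burnside_rel"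
  using R
proof (induction "card (fst R)" arbitrary: R rule: less_induct)
  case less
  have rR: "is_rack R" "finite (fst R)" using less.prems unfolding finite_rack_def by auto
  show ?case
  proof (cases "fst R = {}")
    case True
    have Req: "({}, snd R) = R" using True by (metis prod.collapse)
    have "decomposition R {} {}" unfolding decomposition_def subrack_def using True by simp
    then have "(\<lambda>X. gen R X - gen ({}, snd R) X - gen ({}, snd R) X) \<in> burnside_rel"
      using burnside_rel.rel_dec[OF less.prems] by blast
    then have "(\<lambda>X. - gen R X) \<in> burnside_rel" unfolding Req by simp
    then have "(\<lambda>X. - (- gen R X)) \<in> burnside_rel" using burnside_rel.rel_neg by blast
    then have "(\<lambda>X. gen R X - (\<lambda>_. 0) X) \<in> burnside_rel" by simp
    then show ?thesis by (intro exI[of _ "\<lambda>_. 0"]) simp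
  next
    case ne: False
    show ?thesis
    proof (cases "connected_rack R")
      case True
      obtain C where C: "C \<in> \<C>" "rack_iso R C" using rep less.prems True unfolding rep_set_def by blast
      have fC: "finite_rack C" using rep C(1) unfolding rep_set_def by blast
      have "(\<lambda>X. gen R X - gen C X) \<in> burnside_rel" using burnside_rel.rel_iso[OF less.prems fC C(2)] .
      moreover have "{X. gen C X \<noteq> 0} = {C}" by (auto simp: gen_def)
      ultimately show ?thesis using C(1) by (intro exI[of _ "gen C"]) simp
    next
      case False
      then obtain x0 y0 where xy: "x0 \<in> fst R" "y0 \<in> fst R" "\<forall>g\<in>Inn R. g x0 \<noteq> y0"
        using ne unfolding connected_rack_def by blast
      let ?O = "{g x0 |g. g \<in> Inn R}"
      let ?T = "fst R - ?O"
      have dec: "decomposition R ?O ?T" using orbit_decomposition[OF rR(1) xy(1)] .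
      have Osub: "?O \<subseteq> fst R" "subrack R ?O" "subrack R ?T" using dec unfolding decomposition_def subrack_def by auto
      have "y0 \<notin> ?O" using xy(3) by blast
      then have "?O \<subset> fst R" using Osub(1) xy(2) by blast
      then have cO: "card ?O < card (fst R)" using rR(2) by (rule psubset_card_mono[rotated])
      have "x0 = id x0" by simp
      then have "x0 \<in> ?O" using Inn.Inn_id[of R] by blast
      then have "?T \<subset> fst R" using xy(1) by blast
      then have cT: "card ?T < card (fst R)" using rR(2) by (rule psubset_card_mono[rotated])
      have "finite ?O" "finite ?T" using Osub(1) rR(2) finite_subset by auto
      then have fO: "finite_rack (?O, snd R)" "finite_rack (?T, snd R)"
        using subrack_rack[OF rR(1) Osub(2)] subrack_rack[OF rR(1) Osub(3)] unfolding finite_rack_def by simp_all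
      obtain yS where yS: "finite {X. yS X \<noteq> 0}" "{X. yS X \<noteq> 0} \<subseteq> \<C>" "(\<lambda>X. gen (?O, snd R) X - yS X) \<in> burnside_rel"
        using less.hyps[of "(?O, snd R)", OF _ fO(1)] cO unfolding fst_conv by blast
      obtain yT where yT: "finite {X. yT X \<noteq> 0}" "{X. yT X \<noteq> 0} \<subseteq> \<C>" "(\<lambda>X. gen (?T, snd R) X - yT X) \<in> burnside_rel"
        using less.hyps[of "(?T, snd R)", OF _ fO(2)] cT unfolding fst_conv by blast
      have d: "(\<lambda>X. gen R X - gen (?O, snd R) X - gen (?T, snd R) X) \<in> burnside_rel"
        using burnside_rel.rel_dec[OF less.prems dec] .
      have "(\<lambda>X. (gen R X - gen (?O, snd R) X - gen (?T, snd R) X) + (gen (?O, snd R) X - yS X) + (gen (?T, snd R) X - yT X)) \<in> burnside_rel"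
        using rel_add3[OF d yS(3) yT(3)] .
      moreover have "(\<lambda>X. (gen R X - gen (?O, snd R) X - gen (?T, snd R) X) + (gen (?O, snd R) X - yS X) + (gen (?T, snd R) X - yT X))
         = (\<lambda>X. gen R X - (yS X + yT X))" by (rule ext) (simp only: diff_add_cancel diff_diff_eq add_diff_eq)
      ultimately have "(\<lambda>X. gen R X - (yS X + yT X)) \<in> burnside_rel" by simp
      moreover have sb: "{X. yS X + yT X \<noteq> 0} \<subseteq> {X. yS X \<noteq> 0} \<union> {X. yT X \<noteq> 0}" by auto
      moreover have "finite {X. yS X + yT X \<noteq> 0}" using finite_subset[OF sb] yS(1) yT(1) by blast
      moreover have "{X. yS X + yT X \<noteq> 0} \<subseteq> \<C>" using sb yS(2) yT(2) by blast
      ultimately show ?thesis by (intro exI[of _ "\<lambda>X. yS X + yT X"]) auto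
    qed
  qed
qed

lemma reduce_elem:
  assumes rep: "rep_set \<C>" and x: "free_elem x"
  shows "\<exists>y. finite {X. y X \<noteq> 0} \<and> {X. y X \<noteq> 0} \<subseteq> \<C> \<and> (\<lambda>X. x X - y X) \<in> burnside_rel"
proof -
  have "\<forall>x. {X. x X \<noteq> 0} \<subseteq> F \<and> (\<forall>R. x R \<noteq> 0 \<longrightarrow> finite_rack R) \<longrightarrow>
     (\<exists>y. finite {X. y X \<noteq> 0} \<and> {X. y X \<noteq> 0} \<subseteq> \<C> \<and> (\<lambda>X. x X - y X) \<in> burnside_rel)"
    if "finite F" for F
    using that
  proof (induction F rule: finite_induct)
    case empty
    show ?case
    proof (intro allI impI)
      fix x :: "rack \<Rightarrow> int" assume "{X. x X \<noteq> 0} \<subseteq> {} \<and> (\<forall>R. x R \<noteq> 0 \<longrightarrow> finite_rack R)"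
      then have "x = (\<lambda>_. 0)" by auto
      then show "\<exists>y. finite {X. y X \<noteq> 0} \<and> {X. y X \<noteq> 0} \<subseteq> \<C> \<and> (\<lambda>X. x X - y X) \<in> burnside_rel"
        using burnside_rel.rel_zero by (intro exI[of _ "\<lambda>_. 0"]) simp
    qed
  next
    case (insert R F)
    show ?case
    proof (intro allI impI)
      fix x :: "rack \<Rightarrow> int" assume a: "{X. x X \<noteq> 0} \<subseteq> insert R F \<and> (\<forall>R. x R \<noteq> 0 \<longrightarrow> finite_rack R)"
      let ?x' = "x(R := 0)"
      have "{X. ?x' X \<noteq> 0} \<subseteq> F \<and> (\<forall>R. ?x' R \<noteq> 0 \<longrightarrow> finite_rack R)" using a by auto
      then obtain y' where y': "finite {X. y' X \<noteq> 0}" "{X. y' X \<noteq> 0} \<subseteq> \<C>" "(\<lambda>X. ?x' X - y' X) \<in> burnside_rel"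
        using insert.IH by blast
      show "\<exists>y. finite {X. y X \<noteq> 0} \<and> {X. y X \<noteq> 0} \<subseteq> \<C> \<and> (\<lambda>X. x X - y X) \<in> burnside_rel"
      proof (cases "x R = 0")
        case True
        then have "?x' = x" by auto
        then show ?thesis using y' by (intro exI[of _ y']) simp
      next
        case False
        then have "finite_rack R" using a by blast
        then obtain yR where yR: "finite {X. yR X \<noteq> 0}" "{X. yR X \<noteq> 0} \<subseteq> \<C>" "(\<lambda>X. gen R X - yR X) \<in> burnside_rel"
          using reduce_gen[OF rep] by blast
        have m: "(\<lambda>X. x R * (gen R X - yR X)) \<in> burnside_rel" using rel_smult[OF yR(3)] .
        have "(\<lambda>X. (?x' X - y' X) + x R * (gen R X - yR X)) \<in> burnside_rel"
          using burnside_rel.rel_add[OF y'(3) m] .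
        moreover have "(\<lambda>X. (?x' X - y' X) + x R * (gen R X - yR X)) = (\<lambda>X. x X - (y' X + x R * yR X))"
        proof (rule ext)
          fix X show "(?x' X - y' X) + x R * (gen R X - yR X) = x X - (y' X + x R * yR X)"
            by (cases "X = R") (simp_all add: gen_def algebra_simps)
        qed
        ultimately have "(\<lambda>X. x X - (y' X + x R * yR X)) \<in> burnside_rel" by simp
        moreover have sb: "{X. y' X + x R * yR X \<noteq> 0} \<subseteq> {X. y' X \<noteq> 0} \<union> {X. yR X \<noteq> 0}" by auto
        moreover have "finite {X. y' X + x R * yR X \<noteq> 0}" using finite_subset[OF sb] y'(1) yR(1) by blast
        moreover have "{X. y' X + x R * yR X \<noteq> 0} \<subseteq> \<C>" using sb y'(2) yR(2) by blast
        ultimately show ?thesis by (intro exI[of _ "\<lambda>X. y' X + x R * yR X"]) auto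
      qed
    qed
  qed
  moreover have "finite {X. x X \<noteq> 0}" "\<forall>R. x R \<noteq> 0 \<longrightarrow> finite_rack R" using x unfolding free_elem_def by auto
  ultimately show ?thesis by blast
qed

definition sj :: "rack \<Rightarrow> rack \<Rightarrow> nat" where
  "sj D X = card {f \<in> Mor D X. f ` fst D = fst X}"

definition good :: "rack \<Rightarrow> nat set \<Rightarrow> bool" where
  "good C E \<longleftrightarrow> E \<subseteq> fst C \<and> finite_rack (E, snd C) \<and> connected_rack (E, snd C)"

definition subc :: "rack \<Rightarrow> rack \<Rightarrow> nat" where
  "subc E' C = card {E. good C E \<and> rack_iso (E, snd C) E'}"

lemma hom_split:
  assumes "finite_rack D" "finite_rack C"
  shows "card (Mor D C) = (\<Sum>E\<in>Pow (fst C). sj D (E, snd C))"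
proof -
  have fin: "finite (Mor D C)" "finite (Pow (fst C))"
    using Mor_finite assms unfolding finite_rack_def by auto
  have im: "(\<lambda>f. f ` fst D) ` Mor D C \<subseteq> Pow (fst C)" unfolding Mor_def by auto
  have "card (Mor D C) = (\<Sum>f\<in>Mor D C. 1)" by simp
  also have "\<dots> = (\<Sum>E\<in>Pow (fst C). \<Sum>f\<in>{f. f \<in> Mor D C \<and> f ` fst D = E}. 1)"
    using sum.group[OF fin im, of "\<lambda>_. 1::nat"] by simp
  also have "\<dots> = (\<Sum>E\<in>Pow (fst C). sj D (E, snd C))"
  proof (rule sum.cong[OF refl])
    fix E assume E: "E \<in> Pow (fst C)"
    have "{f. f \<in> Mor D C \<and> f ` fst D = E} = {f \<in> Mor D (E, snd C). f ` fst D = fst (E, snd C)}"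
    proof (rule Collect_cong)
      fix f
      show "(f \<in> Mor D C \<and> f ` fst D = E) = (f \<in> Mor D (E, snd C) \<and> f ` fst D = fst (E, snd C))"
      proof (cases "f ` fst D = E")
        case True
        have "f \<in> fst D \<rightarrow> E" "f \<in> fst D \<rightarrow> fst C" using True E by auto
        then have "f \<in> fst D \<rightarrow>\<^sub>E E \<longleftrightarrow> f \<in> fst D \<rightarrow>\<^sub>E fst C" unfolding PiE_def by simp
        then show ?thesis using True \<open>f \<in> fst D \<rightarrow> E\<close> \<open>f \<in> fst D \<rightarrow> fst C\<close>
          unfolding Mor_def rack_hom_def by simp
      qed simp
    qed
    then show "(\<Sum>f\<in>{f. f \<in> Mor D C \<and> f ` fst D = E}. 1) = sj D (E, snd C)"
      unfolding sj_def by simp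
  qed
  finally show ?thesis .
qed

lemma sj_self: assumes "finite_rack D" shows "sj D D \<ge> 1"
proof -
  have rr: "is_rack D" "finite (fst D)" using assms unfolding finite_rack_def by auto
  let ?i = "restrict id (fst D)"
  have p: "?i \<in> fst D \<rightarrow>\<^sub>E fst D" "?i \<in> fst D \<rightarrow> fst D" by auto
  have h: "\<forall>a\<in>fst D. \<forall>b\<in>fst D. ?i (snd D a b) = snd D (?i a) (?i b)"
    using rack_closed[OF rr(1)] by simp
  have "?i \<in> Mor D D" unfolding Mor_def rack_hom_def using p h by blast
  moreover have "?i ` fst D = fst D" by simp
  ultimately have ne: "{f \<in> Mor D D. f ` fst D = fst D} \<noteq> {}" by blast
  have "finite {f \<in> Mor D D. f ` fst D = fst D}"
    using Mor_finite[OF rr(2) rr(2)] by simp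
  then have "card {f \<in> Mor D D. f ` fst D = fst D} > 0" using ne card_gt_0_iff by blast
  then show ?thesis unfolding sj_def by simp
qed

lemma sj_nonzero:
  assumes "finite_rack D" "sj D X \<noteq> 0"
  shows "card (fst X) \<le> card (fst D)" "card (fst X) = card (fst D) \<Longrightarrow> rack_iso D X"
proof -
  obtain f where f: "f \<in> Mor D X" "f ` fst D = fst X"
  proof -
    have "{f \<in> Mor D X. f ` fst D = fst X} \<noteq> {}" using assms(2) unfolding sj_def by (metis card.empty)
    then show ?thesis using that by blast
  qed
  have fD: "finite (fst D)" using assms(1) unfolding finite_rack_def by simp
  show "card (fst X) \<le> card (fst D)" using f(2) card_image_le[OF fD, of f] by simp
  assume eq: "card (fst X) = card (fst D)"
  then have "card (f ` fst D) = card (fst D)" using f(2) by simp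
  then have "inj_on f (fst D)" using eq_card_imp_inj_on[OF fD] by blast
  then have "bij_betw f (fst D) (fst X)" using f(2) unfolding bij_betw_def by simp
  moreover have "rack_hom D X f" using f(1) unfolding Mor_def by simp
  ultimately show "rack_iso D X" unfolding rack_iso_def by blast
qed

lemma Inn_transport:
  assumes "is_rack D" "is_rack C" "E \<subseteq> fst C" "f \<in> Mor D (E, snd C)" "f ` fst D = E" "g \<in> Inn D"
  shows "\<exists>g'\<in>Inn (E, snd C). \<forall>c\<in>fst D. g' (f c) = f (g c)"
  using assms(6)
proof (induction g rule: Inn.induct)
  case Inn_id
  have "id \<in> Inn (E, snd C)" by (rule Inn.Inn_id)
  moreover have "\<forall>c\<in>fst D. id (f c) = f (id c)" by simp
  ultimately show ?case by blast
next
  have hom: "\<forall>a\<in>fst D. \<forall>b\<in>fst D. f (snd D a b) = snd C (f a) (f b)"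
    using assms(4) unfolding Mor_def rack_hom_def by simp
  case (Inn_left g a)
  obtain g' where g': "g' \<in> Inn (E, snd C)" "\<forall>c\<in>fst D. g' (f c) = f (g c)" using Inn_left.IH by blast
  have fa: "f a \<in> fst (E, snd C)" using assms(5) Inn_left(2) by auto
  have "snd (E, snd C) (f a) \<circ> g' \<in> Inn (E, snd C)" using Inn.Inn_left[OF g'(1) fa] .
  moreover have "\<forall>c\<in>fst D. (snd (E, snd C) (f a) \<circ> g') (f c) = f ((snd D a \<circ> g) c)"
    using g'(2) hom Inn_left(2) Inn_closed[OF Inn_left(1) assms(1)] by simp
  ultimately show ?case by blast
next
  have hom: "\<forall>a\<in>fst D. \<forall>b\<in>fst D. f (snd D a b) = snd C (f a) (f b)"
    using assms(4) unfolding Mor_def rack_hom_def by simp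
  case (Inn_left_inv g a)
  obtain g' where g': "g' \<in> Inn (E, snd C)" "\<forall>c\<in>fst D. g' (f c) = f (g c)" using Inn_left_inv.IH by blast
  have fa: "f a \<in> fst (E, snd C)" using assms(5) Inn_left_inv(2) by auto
  have "inv_into (fst (E, snd C)) (snd (E, snd C) (f a)) \<circ> g' \<in> Inn (E, snd C)" using Inn.Inn_left_inv[OF g'(1) fa] .
  moreover have "\<forall>c\<in>fst D. (inv_into (fst (E, snd C)) (snd (E, snd C) (f a)) \<circ> g') (f c) = f ((inv_into (fst D) (snd D a) \<circ> g) c)"
  proof
    fix c assume c: "c \<in> fst D"
    have gc: "g c \<in> fst D" using Inn_closed[OF Inn_left_inv(1) assms(1) c] .
    have bj: "bij_betw (snd D a) (fst D) (fst D)" using rack_bij[OF assms(1) Inn_left_inv(2)] .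
    define w where "w = inv_into (fst D) (snd D a) (g c)"
    have w: "w \<in> fst D" "snd D a w = g c" using bj gc unfolding w_def
      by (auto simp: bij_betw_def inv_into_into f_inv_into_f)
    have "f (snd D a w) = snd C (f a) (f w)" using hom Inn_left_inv(2) w(1) by blast
    then have "f (g c) = snd C (f a) (f w)" using w(2) by simp
    moreover have injC: "inj_on (snd C (f a)) (fst C)"
    proof -
      have "f a \<in> fst C" using fa assms(3) by auto
      then show ?thesis using rack_bij[OF assms(2)] unfolding bij_betw_def by blast
    qed
    moreover have "f w \<in> E" using assms(5) w(1) by auto
    ultimately have "inv_into E (snd C (f a)) (f (g c)) = f w"
      using inv_into_f_f[OF inj_on_subset[OF injC assms(3)]] by simp
    then show "(inv_into (fst (E, snd C)) (snd (E, snd C) (f a)) \<circ> g') (f c) = f ((inv_into (fst D) (snd D a) \<circ> g) c)"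
      using g'(2) c unfolding w_def by simp
  qed
  ultimately show ?case by blast
qed

lemma image_good:
  assumes D: "finite_rack D" "connected_rack D" and C: "finite_rack C" and E: "E \<subseteq> fst C"
    and f: "f \<in> Mor D (E, snd C)" "f ` fst D = E"
  shows "good C E"
proof -
  have rD: "is_rack D" "finite (fst D)" using D unfolding finite_rack_def by auto
  have rC: "is_rack C" "finite (fst C)" using C unfolding finite_rack_def by auto
  have hom: "\<forall>a\<in>fst D. \<forall>b\<in>fst D. f (snd D a b) = snd C (f a) (f b)"
    using f(1) unfolding Mor_def rack_hom_def by simp
  have cl: "snd C u v \<in> E" if uv: "u \<in> E" "v \<in> E" for u v
  proof -
    obtain a b where ab: "a \<in> fst D" "b \<in> fst D" "u = f a" "v = f b" using uv f(2) by blast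
    have "snd C u v = f (snd D a b)" using hom ab by simp
    moreover have "snd D a b \<in> fst D" using rack_closed[OF rD(1) ab(1,2)] .
    ultimately show ?thesis using f(2) by blast
  qed
  have bj: "bij_betw (snd C u) E E" if u: "u \<in> E" for u
  proof -
    have "u \<in> fst C" using u E by auto
    then have "inj_on (snd C u) (fst C)" using rack_bij[OF rC(1)] unfolding bij_betw_def by blast
    then have inj: "inj_on (snd C u) E" using E inj_on_subset by blast
    obtain a where a: "a \<in> fst D" "u = f a" using u f(2) by blast
    have "E \<subseteq> snd C u ` E"
    proof
      fix v assume "v \<in> E"
      then obtain b where b: "b \<in> fst D" "v = f b" using f(2) by blast
      have bjD: "bij_betw (snd D a) (fst D) (fst D)" using rack_bij[OF rD(1) a(1)] .
      define w where "w = inv_into (fst D) (snd D a) b"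
      have w: "w \<in> fst D" "snd D a w = b" using bjD b(1) unfolding w_def
        by (auto simp: bij_betw_def inv_into_into f_inv_into_f)
      have "v = snd C u (f w)" using hom a w b by metis
      moreover have "f w \<in> E" using w(1) f(2) by blast
      ultimately show "v \<in> snd C u ` E" by blast
    qed
    moreover have "snd C u ` E \<subseteq> E" using cl u by blast
    ultimately show ?thesis using inj unfolding bij_betw_def by blast
  qed
  have dist: "snd C a (snd C b c) = snd C (snd C a b) (snd C a c)" if "a \<in> E" "b \<in> E" "c \<in> E" for a b c
    using rack_dist[OF rC(1)] that E by blast
  have rE: "is_rack (E, snd C)" using is_rackI[of E "snd C"] cl bj dist by blast
  have fE: "finite E" using E rC(2) finite_subset by blast
  have neD: "fst D \<noteq> {}" "\<forall>x\<in>fst D. \<forall>y\<in>fst D. \<exists>g\<in>Inn D. g x = y"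
    using D(2) unfolding connected_rack_def by auto
  have "\<exists>g'\<in>Inn (E, snd C). g' u = v" if uv: "u \<in> E" "v \<in> E" for u v
  proof -
    obtain c c' where cc: "c \<in> fst D" "c' \<in> fst D" "u = f c" "v = f c'" using uv f(2) by blast
    obtain g where g: "g \<in> Inn D" "g c = c'" using neD(2) cc(1,2) by blast
    obtain g' where g': "g' \<in> Inn (E, snd C)" "\<forall>c\<in>fst D. g' (f c) = f (g c)"
      using Inn_transport[OF rD(1) rC(1) E f g(1)] by blast
    have "g' u = v" using g'(2) cc g(2) by simp
    then show ?thesis using g'(1) by blast
  qed
  moreover have "E \<noteq> {}" using neD(1) f(2) by blast
  ultimately have "connected_rack (E, snd C)" unfolding connected_rack_def by simp
  then show ?thesis unfolding good_def finite_rack_def using rE fE E by simp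
qed

lemma sj_nonzero_good:
  assumes "finite_rack D" "connected_rack D" "finite_rack C" "E \<subseteq> fst C" "sj D (E, snd C) \<noteq> 0"
  shows "good C E"
proof -
  obtain f where f: "f \<in> Mor D (E, snd C)" "f ` fst D = E"
  proof -
    have "{f \<in> Mor D (E, snd C). f ` fst D = fst (E, snd C)} \<noteq> {}" using assms(5) unfolding sj_def by (metis card.empty)
    then show ?thesis using that by auto
  qed
  show ?thesis using image_good[OF assms(1-4) f] .
qed

lemma good_card:
  assumes "finite_rack C" "good C E" "rack_iso (E, snd C) X"
  shows "card (fst X) \<le> card (fst C)" "card (fst X) = card (fst C) \<Longrightarrow> rack_iso C X"
proof -
  obtain h where h: "bij_betw h E (fst X)" "rack_hom (E, snd C) X h" using assms(3) unfolding rack_iso_def by auto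
  have E: "E \<subseteq> fst C" "finite (fst C)" using assms(1,2) unfolding good_def finite_rack_def by auto
  have cE: "card E = card (fst X)" using bij_betw_same_card[OF h(1)] .
  show "card (fst X) \<le> card (fst C)" using cE card_mono[OF E(2) E(1)] by simp
  assume "card (fst X) = card (fst C)"
  then have "E = fst C" using card_subset_eq[OF E(2) E(1)] cE by simp
  then have "(E, snd C) = C" by simp
  then show "rack_iso C X" using assms(3) by simp
qed

lemma subc_self:
  assumes "finite_rack C" "connected_rack C"
  shows "subc C C = 1"
proof -
  have "{E. good C E \<and> rack_iso (E, snd C) C} = {fst C}"
  proof
    show "{E. good C E \<and> rack_iso (E, snd C) C} \<subseteq> {fst C}"
    proof
      fix E assume a: "E \<in> {E. good C E \<and> rack_iso (E, snd C) C}"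
      obtain h where h: "bij_betw h E (fst C)" using a unfolding rack_iso_def by auto
      have E: "E \<subseteq> fst C" "finite (fst C)" using assms(1) a unfolding good_def finite_rack_def by auto
      have "card E = card (fst C)" using bij_betw_same_card[OF h] .
      then show "E \<in> {fst C}" using card_subset_eq[OF E(2) E(1)] by simp
    qed
    show "{fst C} \<subseteq> {E. good C E \<and> rack_iso (E, snd C) C}"
      using assms rack_iso_refl[of C] unfolding good_def by simp
  qed
  then show ?thesis unfolding subc_def by simp
qed

lemma rep_unique:
  assumes "rep_set \<C>" "A \<in> \<C>" "B \<in> \<C>" "rack_iso A B"
  shows "A = B"
proof -
  have "finite_rack A \<and> connected_rack A" using assms(1,2) unfolding rep_set_def by blast
  then have "\<exists>!C. C \<in> \<C> \<and> rack_iso A C" using assms(1) unfolding rep_set_def by blast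
  then show ?thesis using assms(2,3,4) rack_iso_refl[of A] by blast
qed

lemma sum_if_const:
  assumes "finite A"
  shows "(\<Sum>E\<in>A. if P E then (v::int) else 0) = v * int (card {E \<in> A. P E})"
proof -
  have "(\<Sum>E\<in>A. if P E then v else 0) = (\<Sum>E\<in>{E \<in> A. P E}. v)"
    using sum.inter_filter[OF assms, of "\<lambda>_. v" P] by simp
  then show ?thesis by simp
qed

lemma sj_expand:
  assumes rep: "rep_set \<C>" and D: "finite_rack D" "connected_rack D" and C: "finite_rack C"
    and E: "E \<subseteq> fst C" and KC: "K \<subseteq> \<C>" and finK: "finite K"
    and Kcov: "\<And>E'. E' \<in> \<C> \<Longrightarrow> good C E \<Longrightarrow> rack_iso (E, snd C) E' \<Longrightarrow> E' \<in> K"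
  shows "int (sj D (E, snd C)) = (\<Sum>E'\<in>K. if good C E \<and> rack_iso (E, snd C) E' then int (sj D E') else 0)"
proof (cases "good C E")
  case True
  then have fc: "finite_rack (E, snd C)" "connected_rack (E, snd C)" unfolding good_def by auto
  then obtain E0 where E0: "E0 \<in> \<C>" "rack_iso (E, snd C) E0" using rep unfolding rep_set_def by blast
  have E0K: "E0 \<in> K" using Kcov[OF E0(1) True E0(2)] .
  have fE0: "finite_rack E0" using rep E0(1) unfolding rep_set_def by blast
  have set: "{E' \<in> K. good C E \<and> rack_iso (E, snd C) E'} = {E0}"
  proof
    show "{E' \<in> K. good C E \<and> rack_iso (E, snd C) E'} \<subseteq> {E0}"
    proof
      fix E' assume a: "E' \<in> {E' \<in> K. good C E \<and> rack_iso (E, snd C) E'}"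
      have "\<exists>!C'. C' \<in> \<C> \<and> rack_iso (E, snd C) C'" using rep fc unfolding rep_set_def by blast
      then show "E' \<in> {E0}" using a E0 KC by blast
    qed
    show "{E0} \<subseteq> {E' \<in> K. good C E \<and> rack_iso (E, snd C) E'}" using E0K True E0(2) by simp
  qed
  have "(\<Sum>E'\<in>K. if good C E \<and> rack_iso (E, snd C) E' then int (sj D E') else 0)
      = (\<Sum>E'\<in>{E' \<in> K. good C E \<and> rack_iso (E, snd C) E'}. int (sj D E'))"
    using sum.inter_filter[OF finK, of "\<lambda>E'. int (sj D E')"] by simp
  also have "\<dots> = int (sj D E0)" using set by simp
  also have "\<dots> = int (sj D (E, snd C))"
    using card_Mor_iso(2)[OF D(1) fc(1) fE0 E0(2)] unfolding sj_def by simp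
  finally show ?thesis by simp
next
  case False
  have "sj D (E, snd C) = 0" using sj_nonzero_good[OF D C E] False by blast
  then show ?thesis using False by simp
qed

lemma hom_expand:
  assumes rep: "rep_set \<C>" and D: "finite_rack D" "connected_rack D" and C: "finite_rack C"
    and KC: "K \<subseteq> \<C>" and finK: "finite K"
    and Kcov: "\<And>E E'. E' \<in> \<C> \<Longrightarrow> good C E \<Longrightarrow> rack_iso (E, snd C) E' \<Longrightarrow> E' \<in> K"
  shows "int (card (Mor D C)) = (\<Sum>E'\<in>K. int (sj D E') * int (subc E' C))"
proof -
  have finP: "finite (Pow (fst C))" using C unfolding finite_rack_def by simp
  have "int (card (Mor D C)) = (\<Sum>E\<in>Pow (fst C). int (sj D (E, snd C)))"
    using hom_split[OF D(1) C] by simp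
  also have "\<dots> = (\<Sum>E\<in>Pow (fst C). \<Sum>E'\<in>K. if good C E \<and> rack_iso (E, snd C) E' then int (sj D E') else 0)"
  proof (rule sum.cong[OF refl])
    fix E assume "E \<in> Pow (fst C)"
    then have E: "E \<subseteq> fst C" by simp
    show "int (sj D (E, snd C)) = (\<Sum>E'\<in>K. if good C E \<and> rack_iso (E, snd C) E' then int (sj D E') else 0)"
      using sj_expand[OF rep D C E KC finK] Kcov by blast
  qed
  also have "\<dots> = (\<Sum>E'\<in>K. \<Sum>E\<in>Pow (fst C). if good C E \<and> rack_iso (E, snd C) E' then int (sj D E') else 0)"
    by (rule sum.swap)
  also have "\<dots> = (\<Sum>E'\<in>K. int (sj D E') * int (subc E' C))"
  proof (rule sum.cong[OF refl])
    fix E' assume "E' \<in> K"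
    have "{E \<in> Pow (fst C). good C E \<and> rack_iso (E, snd C) E'} = {E. good C E \<and> rack_iso (E, snd C) E'}"
      unfolding good_def by auto
    then show "(\<Sum>E\<in>Pow (fst C). if good C E \<and> rack_iso (E, snd C) E' then int (sj D E') else 0) = int (sj D E') * int (subc E' C)"
      using sum_if_const[OF finP, of "\<lambda>E. good C E \<and> rack_iso (E, snd C) E'" "int (sj D E')"]
      unfolding subc_def by simp
  qed
  finally show ?thesis .
qed

lemma step3:
  assumes rep: "rep_set \<C>" and fin: "finite {X. y X \<noteq> 0}" and sub: "{X. y X \<noteq> 0} \<subseteq> \<C>"
    and phi: "\<forall>D\<in>\<C>. Phi D y = 0"
  shows "y = (\<lambda>_. 0)"
proof -
  define N where "N = {X. y X \<noteq> 0}"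
  have rC: "\<And>C. C \<in> \<C> \<Longrightarrow> finite_rack C \<and> connected_rack C" using rep unfolding rep_set_def by blast
  define K where "K = {E' \<in> \<C>. \<exists>C\<in>N. \<exists>E. good C E \<and> rack_iso (E, snd C) E'}"
  have KC: "K \<subseteq> \<C>" unfolding K_def by auto
  have finK: "finite K"
  proof -
    let ?r = "\<lambda>(C, E). THE E'. E' \<in> \<C> \<and> rack_iso (E, snd C) E'"
    have "K \<subseteq> ?r ` (SIGMA C:N. Pow (fst C))"
    proof
      fix E' assume "E' \<in> K"
      then obtain C E where CE: "E' \<in> \<C>" "C \<in> N" "good C E" "rack_iso (E, snd C) E'" unfolding K_def by blast
      have "finite_rack (E, snd C) \<and> connected_rack (E, snd C)" using CE(3) unfolding good_def by simp
      then have "\<exists>!X. X \<in> \<C> \<and> rack_iso (E, snd C) X" using rep unfolding rep_set_def by blast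
      then have "E' = ?r (C, E)" using CE(1,4) by (simp add: the1_equality)
      moreover have "(C, E) \<in> (SIGMA C:N. Pow (fst C))" using CE(2,3) unfolding good_def by simp
      ultimately show "E' \<in> ?r ` (SIGMA C:N. Pow (fst C))" by (intro rev_image_eqI)
    qed
    moreover have "finite (SIGMA C:N. Pow (fst C))"
    proof (rule finite_SigmaI)
      show "finite N" using fin N_def by simp
      fix C assume "C \<in> N"
      then have "finite (fst C)" using sub rC N_def unfolding finite_rack_def by blast
      then show "finite (Pow (fst C))" by simp
    qed
    ultimately show ?thesis using finite_subset by blast
  qed
  have NK: "N \<subseteq> K"
  proof
    fix C assume C: "C \<in> N"
    then have "C \<in> \<C>" using sub N_def by blast
    then have "good C (fst C)" using rC unfolding good_def by simp
    moreover have "rack_iso (fst C, snd C) C" using rack_iso_refl[of C] by simp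
    ultimately show "C \<in> K" using C \<open>C \<in> \<C>\<close> unfolding K_def by blast
  qed
  define m where "m E' = (\<Sum>C\<in>N. y C * int (subc E' C))" for E'
  have key: "(\<Sum>E'\<in>K. int (sj D E') * m E') = 0" if D: "D \<in> \<C>" for D
  proof -
    have e2: "int (card (Mor D C)) = (\<Sum>E'\<in>K. int (sj D E') * int (subc E' C))" if C: "C \<in> N" for C
    proof (rule hom_expand[OF rep _ _ _ KC finK])
      show "finite_rack D" "connected_rack D" using rC D by auto
      show "finite_rack C" using rC C sub N_def by blast
      fix E E' assume "E' \<in> \<C>" "good C E" "rack_iso (E, snd C) E'"
      then show "E' \<in> K" using C unfolding K_def by blast
    qed
    have "0 = Phi D y" using phi D by simp
    also have "\<dots> = (\<Sum>C\<in>N. y C * int (card (Mor D C)))" unfolding Phi_def N_def by simp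
    also have "\<dots> = (\<Sum>C\<in>N. y C * (\<Sum>E'\<in>K. int (sj D E') * int (subc E' C)))"
      using e2 by (intro sum.cong) auto
    also have "\<dots> = (\<Sum>C\<in>N. \<Sum>E'\<in>K. int (sj D E') * (y C * int (subc E' C)))"
      by (rule sum.cong[OF refl]) (simp add: sum_distrib_left mult.left_commute)
    also have "\<dots> = (\<Sum>E'\<in>K. \<Sum>C\<in>N. int (sj D E') * (y C * int (subc E' C)))"
      by (rule sum.swap)
    also have "\<dots> = (\<Sum>E'\<in>K. int (sj D E') * m E')"
      unfolding m_def by (simp add: sum_distrib_left)
    finally show ?thesis by simp
  qed
  have mz: "m E' = 0" if "E' \<in> K" for E'
  proof (rule ccontr)
    assume nz: "m E' \<noteq> 0"
    define A where "A = {E' \<in> K. m E' \<noteq> 0}"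
    have "E' \<in> A" using nz that unfolding A_def by blast
    have "A \<subseteq> K" unfolding A_def by blast
    then have finA: "finite A" "A \<noteq> {}" using finK finite_subset \<open>E' \<in> A\<close> by blast+
    define n0 where "n0 = Min ((\<lambda>E. card (fst E)) ` A)"
    have "n0 \<in> (\<lambda>E. card (fst E)) ` A" unfolding n0_def using finA by (simp add: Min_in)
    then obtain E0 where E0': "n0 = card (fst E0)" "E0 \<in> A" by (rule imageE)
    then have E0: "E0 \<in> A" "card (fst E0) = n0" by simp_all
    have minA: "n0 \<le> card (fst E)" if EA: "E \<in> A" for E
      using finA(1) EA unfolding n0_def by (simp add: Min_le)
    have E0C: "E0 \<in> \<C>" "E0 \<in> K" using E0(1) KC unfolding A_def by auto
    have fE0: "finite_rack E0" using rC E0C(1) by blast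
    have zero: "int (sj E0 E') * m E' = 0" if E': "E' \<in> K - {E0}" for E'
    proof (cases "m E' = 0")
      case False
      then have "E' \<in> A" using E' unfolding A_def by auto
      then have ge: "card (fst E0) \<le> card (fst E')" using minA E0(2) by simp
      have "sj E0 E' = 0"
      proof (rule ccontr)
        assume s: "sj E0 E' \<noteq> 0"
        have "card (fst E') \<le> card (fst E0)" using sj_nonzero(1)[OF fE0 s] .
        then have "rack_iso E0 E'" using sj_nonzero(2)[OF fE0 s] ge by simp
        then have "E0 = E'" using rep_unique[OF rep E0C(1)] E' KC by blast
        then show False using E' by simp
      qed
      then show ?thesis by simp
    qed simp
    have Z: "(\<Sum>E'\<in>K - {E0}. int (sj E0 E') * m E') = 0" by (rule sum.neutral) (use zero in blast)
    have "0 = (\<Sum>E'\<in>K. int (sj E0 E') * m E')" using key[OF E0C(1)] by simp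
    also have "\<dots> = int (sj E0 E0) * m E0 + (\<Sum>E'\<in>K - {E0}. int (sj E0 E') * m E')"
      using sum.remove[OF finK E0C(2)] by simp
    also have "\<dots> = int (sj E0 E0) * m E0" using Z by simp
    finally have "int (sj E0 E0) * m E0 = 0" by simp
    moreover have "sj E0 E0 \<ge> 1" using sj_self[OF fE0] .
    ultimately have "m E0 = 0" by simp
    then show False using E0(1) unfolding A_def by simp
  qed
  have "N = {}"
  proof (rule ccontr)
    assume ne: "N \<noteq> {}"
    have finN: "finite N" using fin N_def by simp
    define n1 where "n1 = Max ((\<lambda>E. card (fst E)) ` N)"
    have "n1 \<in> (\<lambda>E. card (fst E)) ` N" unfolding n1_def using finN ne by (simp add: Max_in)
    then obtain C0 where C0': "n1 = card (fst C0)" "C0 \<in> N" by (rule imageE)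
    then have C0: "C0 \<in> N" "card (fst C0) = n1" by simp_all
    have maxN: "card (fst C) \<le> n1" if CN: "C \<in> N" for C
      using finN CN unfolding n1_def by (simp add: Max_ge)
    have C0C: "C0 \<in> \<C>" using C0(1) sub N_def by blast
    have zero: "y C * int (subc C0 C) = 0" if C: "C \<in> N - {C0}" for C
    proof -
      have CC: "C \<in> \<C>" using C sub N_def by blast
      have fC: "finite_rack C" using rC CC by blast
      have "subc C0 C = 0"
      proof (rule ccontr)
        assume s: "subc C0 C \<noteq> 0"
        then have "{E. good C E \<and> rack_iso (E, snd C) C0} \<noteq> {}" unfolding subc_def by (metis card.empty)
        then obtain E where E: "good C E" "rack_iso (E, snd C) C0" by blast
        have "card (fst C0) \<le> card (fst C)" using good_card(1)[OF fC E] .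
        moreover have "card (fst C) \<le> card (fst C0)" using maxN C C0(2) by simp
        ultimately have "rack_iso C C0" using good_card(2)[OF fC E] by simp
        then have "C = C0" using rep_unique[OF rep CC C0C] by simp
        then show False using C by simp
      qed
      then show ?thesis by simp
    qed
    have "C0 \<in> K" using NK C0(1) by blast
    then have "m C0 = 0" by (rule mz)
    moreover have "m C0 = y C0 * int (subc C0 C0) + (\<Sum>C\<in>N - {C0}. y C * int (subc C0 C))"
      unfolding m_def using sum.remove[OF finN C0(1)] by simp
    moreover have "subc C0 C0 = 1" using subc_self rC C0C by blast
    ultimately have "y C0 = 0" using zero by simp
    then show False using C0(1) N_def by simp
  qed
  then show ?thesis unfolding N_def by auto
qed


theorem theorem5p8:
  fixes \<C> :: "rack set" and x :: "rack \<Rightarrow> int"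
  assumes "rep_set \<C>"
    and "free_elem x"
    and "\<forall>C\<in>\<C>. Phi C x = 0"
  shows "x \<in> burnside_rel"
proof -
  obtain y where y: "finite {X. y X \<noteq> 0}" "{X. y X \<noteq> 0} \<subseteq> \<C>" "(\<lambda>X. x X - y X) \<in> burnside_rel"
    using reduce_elem[OF assms(1,2)] by blast
  have "Phi D y = 0" if D: "D \<in> \<C>" for D
  proof -
    have fc: "finite_rack D" "connected_rack D" using assms(1) D unfolding rep_set_def by auto
    have r: "Phi D (\<lambda>X. x X - y X) = 0" using Phi_rel[OF fc y(3)] by simp
    define F where "F = {X. x X \<noteq> 0} \<union> {X. y X \<noteq> 0}"
    have finF: "finite F" using assms(2) y(1) unfolding F_def free_elem_def by simp
    have s1: "{X. x X \<noteq> 0} \<subseteq> F" "{X. y X \<noteq> 0} \<subseteq> F" "{X. x X - y X \<noteq> 0} \<subseteq> F" unfolding F_def by auto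
    have "Phi D (\<lambda>X. x X - y X) = (\<Sum>X\<in>F. (x X - y X) * int (card (Mor D X)))"
      using Phi_eq[OF finF s1(3)] .
    also have "\<dots> = (\<Sum>X\<in>F. x X * int (card (Mor D X))) - (\<Sum>X\<in>F. y X * int (card (Mor D X)))"
      by (simp add: left_diff_distrib sum_subtractf)
    also have "\<dots> = Phi D x - Phi D y" using Phi_eq[OF finF s1(1)] Phi_eq[OF finF s1(2)] by simp
    finally show ?thesis using r assms(3) D by simp
  qed
  then have "y = (\<lambda>_. 0)" using step3[OF assms(1) y(1,2)] by blast
  then show ?thesis using y(3) by simp
qed

end
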